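(* Let $\mathcal{T}$ be an MPQ-tree of an interval graph $G=(V,E)$, and let $x\ne y$ with $node(x)=node(y)=Q$ a Q-node with sections $S_1,\dots,S_k$. Suppose $x$ and $y$ have exactly one common section $S_i$ in $Q$, and the set $V_i$ of vertices of the subtree $T_i$ induces a clique in $G$ (possibly $V_i=\emptyset$). Then $(x,y)$ is an interval edge.
   Context: Graphs are finite and simple; for $G=(V,E)$ and $e\in E$, $G-e=(V,E\setminus\{e\})$. An edge $(x,y)\in E$ of an interval graph $G$ is an interval edge if $G-(x,y)$ is an interval graph. An MPQ-tree of an interval graph $G=(V,E)$, $V=\{1,\dots,n\}$, is a rooted plane tree whose nodes are P-nodes and Q-nodes. Each P-node carries a (possibly empty) set of vertices. A Q-node has $k\ge 3$ ordered positions $1,\dots,k$; position $i$ carries a set $S_i\subseteq V$ (the $i$-th section) and a child subtree $T_i$, which may be empty. Every vertex $v$ is assigned to exactly one node $node(v)$: either $v$ lies in the set of the P-node $node(v)$, or $node(v)$ is a Q-node and $v$ lies exactly in the sections $S_{l(v)},\dots,S_{r(v)}$ of it, with $l(v)<r(v)$. For a node with child subtrees $T_1,\dots,T_k$, $V_i$ denotes the set of vertices assigned to nodes of $T_i$ ($V_i=\emptyset$ if $T_i$ is empty). The maximal cliques of $G$ are in bijection with the descending paths from the root which at a P-node continue into one of its children (stopping if there is none) and at a Q-node choose a position $i$ and continue into $T_i$ (stopping if $T_i$ is empty); the clique is the union of the sets of the visited P-nodes and the chosen sections. Reading these cliques left to right gives a linear order of the maximal cliques, and the orders obtained this way after arbitrarily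 permuting children of P-nodes and reversing the positions of Q-nodes are exactly the orders of the maximal cliques of $G$ in which the cliques containing any fixed vertex are consecutive. Moreover, for every Q-node with sections $S_1,\dots,S_k$: (a) $V_1\neq\emptyset$ and $V_k\ne\emptyset$; (b) $S_1\subseteq S_2$ and $S_k\subseteq S_{k-1}$; (c) $S_{i-1}\cap S_i\neq\emptyset$ for $2\le i\le k$; (d) $S_{i-1}\neq S_i$ for $2\le i\le k$; (e) $(S_i\cap S_{i+1})\setminus S_1\neq\emptyset$ and $(S_{i-1}\cap S_i)\setminus S_k\neq\emptyset$ for $2\le i\le k-1$; (f) $(S_{i-1}\cup V_{i-1})\setminus S_i\neq\emptyset$ and $(S_i\cup V_i)\setminus S_{i-1}\neq\emptyset$ for $2\le i\le k$; and further (g) no empty P-node has an empty P-node as its parent, (h) no P-node has exactly one child whose root is a P-node, (i) every child subtree of a P-node is nonempty. *)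

theory Defs
  imports Complex_Main "HOL-Library.Multiset"
begin

definition simple_graph :: "nat \<Rightarrow> nat set set \<Rightarrow> bool" where
  "simple_graph n E \<longleftrightarrow> (\<forall>e\<in>E. \<exists>u v. e = {u, v} \<and> u \<noteq> v \<and> u \<in> {1..n} \<and> v \<in> {1..n})"

definition interval_graph :: "nat \<Rightarrow> nat set set \<Rightarrow> bool" where
  "interval_graph n E \<longleftrightarrow> simple_graph n E \<and>
     (\<exists>a b :: nat \<Rightarrow> real. (\<forall>v\<in>{1..n}. a v \<le> b v) \<and>
        (\<forall>u\<in>{1..n}. \<forall>v\<in>{1..n}. u \<noteq> v \<longrightarrow> ({u, v} \<in> E \<longleftrightarrow> a u \<le> b v \<and> a v \<le> b u)))"

definition interval_edge :: "nat \<Rightarrow> nat set set \<Rightarrow> nat \<Rightarrow> nat \<Rightarrow> bool" where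
  "interval_edge n E x y \<longleftrightarrow> {x, y} \<in> E \<and> interval_graph n (E - {{x, y}})"

definition is_clique :: "nat \<Rightarrow> nat set set \<Rightarrow> nat set \<Rightarrow> bool" where
  "is_clique n E C \<longleftrightarrow> C \<subseteq> {1..n} \<and> (\<forall>u\<in>C. \<forall>v\<in>C. u \<noteq> v \<longrightarrow> {u, v} \<in> E)"

definition max_clique :: "nat \<Rightarrow> nat set set \<Rightarrow> nat set \<Rightarrow> bool" where
  "max_clique n E C \<longleftrightarrow> is_clique n E C \<and> (\<forall>D. is_clique n E D \<and> C \<subseteq> D \<longrightarrow> D = C)"

definition consecutive_clique_order :: "nat \<Rightarrow> nat set set \<Rightarrow> nat set list \<Rightarrow> bool" where
  "consecutive_clique_order n E Cs \<longleftrightarrow> distinct Cs \<and> set Cs = {C. max_clique n E C} \<and>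
     (\<forall>v. \<forall>i j k. i \<le> j \<and> j \<le> k \<and> k < length Cs \<and> v \<in> Cs ! i \<and> v \<in> Cs ! k \<longrightarrow> v \<in> Cs ! j)"

text \<open>A P-node carries a vertex set and a list of (nonempty) child subtrees;
a Q-node carries its positions in order: the section S_i and the child subtree T_i,
which may be empty (None).\<close>
datatype mpq = PNode "nat set" "mpq list" | QNode "(nat set \<times> mpq option) list"

fun vset :: "mpq \<Rightarrow> nat set" where
  "vset (PNode S cs) = S \<union> (\<Union>c\<in>set cs. vset c)"
| "vset (QNode ps) = (\<Union>p\<in>set ps. fst p \<union> (case snd p of None \<Rightarrow> {} | Some c \<Rightarrow> vset c))"

definition subvs :: "mpq option \<Rightarrow> nat set" where
  "subvs t = (case t of None \<Rightarrow> {} | Some c \<Rightarrow> vset c)"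

fun own :: "mpq \<Rightarrow> nat set" where
  "own (PNode S cs) = S"
| "own (QNode ps) = (\<Union>p\<in>set ps. fst p)"

text \<open>Node addressed by a path of child indices (0-based).\<close>
fun subtree :: "mpq \<Rightarrow> nat list \<Rightarrow> mpq option" where
  "subtree t [] = Some t"
| "subtree (PNode S cs) (i # p) = (if i < length cs then subtree (cs ! i) p else None)"
| "subtree (QNode ps) (i # p) =
     (if i < length ps then (case snd (ps ! i) of None \<Rightarrow> None | Some c \<Rightarrow> subtree c p) else None)"

fun cliques :: "mpq \<Rightarrow> nat set list" where
  "cliques (PNode S cs) = (if cs = [] then [S] else map ((\<union>) S) (concat (map cliques cs)))"
| "cliques (QNode ps) = concat (map (\<lambda>p. case snd p of None \<Rightarrow> [fst p]
                                   | Some c \<Rightarrow> map ((\<union>) (fst p)) (cliques c)) ps)"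

inductive reord :: "mpq \<Rightarrow> mpq \<Rightarrow> bool" where
  reord_P: "\<lbrakk>length ds = length cs; \<forall>i<length cs. reord (cs ! i) (ds ! i); mset es = mset ds\<rbrakk>
            \<Longrightarrow> reord (PNode S cs) (PNode S es)"
| reord_Q: "\<lbrakk>length qs = length ps;
             \<forall>i<length ps. fst (qs ! i) = fst (ps ! i) \<and>
                ((snd (ps ! i) = None \<and> snd (qs ! i) = None) \<or>
                 (\<exists>c d. snd (ps ! i) = Some c \<and> snd (qs ! i) = Some d \<and> reord c d));
             rs = qs \<or> rs = rev qs\<rbrakk>
            \<Longrightarrow> reord (QNode ps) (QNode rs)"

text \<open>Local well-formedness of a node: Q-node conditions (k >= 3, contiguity of vertices
in sections with l(v) < r(v), and (a)-(f); indices shifted to 0-based), P-node conditions (g), (h);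
(i) holds by construction of the datatype.\<close>
fun node_ok :: "mpq \<Rightarrow> bool" where
  "node_ok (PNode S cs) \<longleftrightarrow>
     (S = {} \<longrightarrow> (\<forall>c\<in>set cs. \<forall>ds. c \<noteq> PNode {} ds)) \<and>
     \<not> (\<exists>S' ds. cs = [PNode S' ds])"
| "node_ok (QNode ps) \<longleftrightarrow>
     (let k = length ps; S = (\<lambda>i. fst (ps ! i)); W = (\<lambda>i. subvs (snd (ps ! i))) in
       k \<ge> 3 \<and>
       (\<forall>v\<in>(\<Union>i<k. S i). \<exists>l r. l < r \<and> r < k \<and> (\<forall>j<k. v \<in> S j \<longleftrightarrow> l \<le> j \<and> j \<le> r)) \<and>
       W 0 \<noteq> {} \<and> W (k - 1) \<noteq> {} \<and>
       S 0 \<subseteq> S 1 \<and> S (k - 1) \<subseteq> S (k - 2) \<and>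
       (\<forall>i. 1 \<le> i \<and> i < k \<longrightarrow> S (i - 1) \<inter> S i \<noteq> {}) \<and>
       (\<forall>i. 1 \<le> i \<and> i < k \<longrightarrow> S (i - 1) \<noteq> S i) \<and>
       (\<forall>i. 1 \<le> i \<and> i \<le> k - 2 \<longrightarrow> (S i \<inter> S (i + 1)) - S 0 \<noteq> {} \<and> (S (i - 1) \<inter> S i) - S (k - 1) \<noteq> {}) \<and>
       (\<forall>i. 1 \<le> i \<and> i < k \<longrightarrow> (S (i - 1) \<union> W (i - 1)) - S i \<noteq> {} \<and> (S i \<union> W i) - S (i - 1) \<noteq> {}))"

definition mpq_tree :: "nat \<Rightarrow> nat set set \<Rightarrow> mpq \<Rightarrow> bool" where
  "mpq_tree n E T \<longleftrightarrow>
     (\<forall>p t. subtree T p = Some t \<longrightarrow> node_ok t) \<and>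
     vset T = {1..n} \<and>
     (\<forall>v\<in>{1..n}. \<exists>!p. \<exists>t. subtree T p = Some t \<and> v \<in> own t) \<and>
     distinct (cliques T) \<and> set (cliques T) = {C. max_clique n E C} \<and>
     {cliques T' | T'. reord T T'} = {Cs. consecutive_clique_order n E Cs}"

end

theory Submission
  imports Defs
begin



lemma snds_snd: "c \<in> Basic_BNFs.snds p \<longleftrightarrow> c = snd p"
  by (cases p) auto

lemma reord_refl: "reord t t"
proof (induction t)
  case (PNode S cs)
  show ?case by (rule reord_P[where ds=cs]) (auto simp: PNode.IH)
next
  case (QNode ps)
  show ?case
  proof (rule reord_Q[where qs=ps])
    show "\<forall>i<length ps. fst (ps ! i) = fst (ps ! i) \<and>
                ((snd (ps ! i) = None \<and> snd (ps ! i) = None) \<or>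
                 (\<exists>c d. snd (ps ! i) = Some c \<and> snd (ps ! i) = Some d \<and> reord c d))"
    proof (intro allI impI)
      fix i assume "i < length ps"
      hence m: "ps ! i \<in> set ps" by simp
      show "fst (ps ! i) = fst (ps ! i) \<and>
                ((snd (ps ! i) = None \<and> snd (ps ! i) = None) \<or>
                 (\<exists>c d. snd (ps ! i) = Some c \<and> snd (ps ! i) = Some d \<and> reord c d))"
        using QNode.IH[OF m] by (cases "snd (ps ! i)") (auto simp: snds_snd)
    qed
  qed auto
qed

lemma subtree_app: "subtree t p = Some s \<Longrightarrow> subtree t (p @ r) = subtree s r"
proof (induction p arbitrary: t)
  case Nil thus ?case by simp
next
  case (Cons k p)
  show ?case
  proof (cases t)
    case (PNode S cs) thus ?thesis using Cons by (auto split: if_splits)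
  next
    case (QNode ps) thus ?thesis using Cons by (auto split: if_splits option.splits)
  qed
qed

lemma own_vset: "own t \<subseteq> vset t"
  by (cases t) auto

lemma subtree_vset: "subtree t p = Some s \<Longrightarrow> vset s \<subseteq> vset t"
proof (induction p arbitrary: t)
  case Nil thus ?case by simp
next
  case (Cons k p)
  show ?case
  proof (cases t)
    case (PNode S cs) thus ?thesis using Cons by (force split: if_splits)
  next
    case (QNode ps)
    with Cons.prems have k: "k < length ps" and "\<exists>c. snd (ps ! k) = Some c \<and> subtree c p = Some s"
      by (auto split: if_splits option.splits)
    then obtain c where c: "snd (ps ! k) = Some c" "subtree c p = Some s" by blast
    have "vset c \<subseteq> vset t" using QNode k c(1) by (force simp: in_set_conv_nth)
    thus ?thesis using Cons.IH[OF c(2)] by blast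
  qed
qed

definition loc :: "mpq \<Rightarrow> nat \<Rightarrow> nat list set" where
  "loc t v = {p. \<exists>s. subtree t p = Some s \<and> v \<in> own s}"

lemma vset_loc: "v \<in> vset t \<Longrightarrow> \<exists>p. p \<in> loc t v"
proof (induction t)
  case (PNode S cs)
  show ?case
  proof (cases "v \<in> S")
    case True thus ?thesis unfolding loc_def by (intro exI[of _ "[]"]) auto
  next
    case False
    then obtain k where k: "k < length cs" "v \<in> vset (cs ! k)" using PNode.prems
      by (auto simp: in_set_conv_nth)
    then obtain p where "p \<in> loc (cs ! k) v" using PNode.IH[of "cs ! k"] by auto
    thus ?thesis using k unfolding loc_def by (intro exI[of _ "k # p"]) auto
  qed
next
  case (QNode ps)
  show ?case
  proof (cases "v \<in> own (QNode ps)")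
    case True thus ?thesis unfolding loc_def by (intro exI[of _ "[]"]) auto
  next
    case False
    then obtain k c where k: "k < length ps" "snd (ps ! k) = Some c" "v \<in> vset c" using QNode.prems
      by (auto simp: in_set_conv_nth split: option.splits)
    then obtain p where "p \<in> loc c v" using QNode.IH[of "ps ! k" "Some c" c] by (auto simp: snds_snd)
    thus ?thesis using k unfolding loc_def by (intro exI[of _ "k # p"]) auto
  qed
qed

lemma loc_vset: "p \<in> loc t v \<Longrightarrow> v \<in> vset t"
  unfolding loc_def using subtree_vset own_vset by blast

lemma cliques_vset: "C \<in> set (cliques t) \<Longrightarrow> C \<subseteq> vset t"
proof (induction t arbitrary: C)
  case (PNode S cs)
  thus ?case by (auto split: if_splits)
next
  case (QNode ps)
  from QNode.prems obtain p where p: "p \<in> set ps"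
    "C \<in> set (case snd p of None \<Rightarrow> [fst p] | Some c \<Rightarrow> map ((\<union>) (fst p)) (cliques c))" by auto
  show ?case
  proof (cases "snd p")
    case None thus ?thesis using p by auto
  next
    case (Some c)
    then obtain C' where "C = fst p \<union> C'" "C' \<in> set (cliques c)" using p by auto
    moreover have "C' \<subseteq> vset c" using QNode.IH[of p "Some c" c] calculation Some p(1) by (auto simp: snds_snd)
    ultimately show ?thesis using p(1) Some by force
  qed
qed


lemma loc_root: "v \<in> own t \<Longrightarrow> [] \<in> loc t v"
  unfolding loc_def by auto

lemma loc_P: "k < length cs \<Longrightarrow> p \<in> loc (cs ! k) v \<Longrightarrow> k # p \<in> loc (PNode S cs) v"
  unfolding loc_def by auto

lemma loc_Q: "k < length ps \<Longrightarrow> snd (ps ! k) = Some c \<Longrightarrow> p \<in> loc c v \<Longrightarrow> k # p \<in> loc (QNode ps) v"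
  unfolding loc_def by auto

lemma cliques_P: "C \<in> set (cliques (PNode S cs)) \<Longrightarrow> cs \<noteq> [] \<Longrightarrow>
   \<exists>j C'. j < length cs \<and> C' \<in> set (cliques (cs ! j)) \<and> C = S \<union> C'"
proof -
  assume C: "C \<in> set (cliques (PNode S cs))" and ne: "cs \<noteq> []"
  then obtain C' where C': "C' \<in> set (concat (map cliques cs))" "C = S \<union> C'" by auto
  then obtain c where c: "c \<in> set cs" "C' \<in> set (cliques c)" by auto
  then obtain j where "j < length cs" "c = cs ! j" by (auto simp: in_set_conv_nth)
  thus ?thesis using C' c by blast
qed

lemma cliques_P_intro: "k < length cs \<Longrightarrow> C' \<in> set (cliques (cs ! k)) \<Longrightarrow>
   S \<union> C' \<in> set (cliques (PNode S cs))"
proof -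
  assume k: "k < length cs" and C': "C' \<in> set (cliques (cs ! k))"
  have "cs ! k \<in> set cs" using k by simp
  hence "C' \<in> set (concat (map cliques cs))" using C' by auto
  moreover have "cs \<noteq> []" using k by auto
  ultimately show ?thesis by simp
qed

lemma cliques_Q: "C \<in> set (cliques (QNode ps)) \<Longrightarrow>
   \<exists>j. j < length ps \<and> ((snd (ps ! j) = None \<and> C = fst (ps ! j)) \<or>
        (\<exists>c C'. snd (ps ! j) = Some c \<and> C' \<in> set (cliques c) \<and> C = fst (ps ! j) \<union> C'))"
proof -
  assume C: "C \<in> set (cliques (QNode ps))"
  then obtain p where p: "p \<in> set ps" "C \<in> set (case snd p of None \<Rightarrow> [fst p]
                                   | Some c \<Rightarrow> map ((\<union>) (fst p)) (cliques c))" by auto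
  then obtain j where j: "j < length ps" "p = ps ! j" by (auto simp: in_set_conv_nth)
  show ?thesis
  proof (cases "snd p")
    case None thus ?thesis using p j by auto
  next
    case (Some c) thus ?thesis using p j by auto
  qed
qed

lemma cliques_Q_intro: assumes "j < length ps" "snd (ps ! j) = Some c" "C' \<in> set (cliques c)"
  shows "fst (ps ! j) \<union> C' \<in> set (cliques (QNode ps))"
proof -
  have "ps ! j \<in> set ps" using assms by simp
  moreover have "fst (ps ! j) \<union> C' \<in> set (case snd (ps ! j) of None \<Rightarrow> [fst (ps ! j)]
                                   | Some c \<Rightarrow> map ((\<union>) (fst (ps ! j))) (cliques c))"
    using assms by simp
  ultimately show ?thesis by (simp only: cliques.simps set_concat set_map) blast
qed

lemma cliques_Q_intro2: assumes "j < length ps" "snd (ps ! j) = None"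
  shows "fst (ps ! j) \<in> set (cliques (QNode ps))"
proof -
  have "ps ! j \<in> set ps" using assms by simp
  moreover have "fst (ps ! j) \<in> set (case snd (ps ! j) of None \<Rightarrow> [fst (ps ! j)]
                                   | Some c \<Rightarrow> map ((\<union>) (fst (ps ! j))) (cliques c))"
    using assms by simp
  ultimately show ?thesis by (simp only: cliques.simps set_concat set_map) blast
qed

lemma path_cliques: "subtree t p = Some s \<Longrightarrow> \<exists>A. (\<forall>c\<in>set (cliques s). A \<union> c \<in> set (cliques t)) \<and>
   (\<forall>v\<in>A. \<exists>p'\<in>loc t v. p' \<noteq> p) \<and>
   (\<forall>C\<in>set (cliques t). (\<exists>c\<in>set (cliques s). C = A \<union> c) \<or> (\<forall>v\<in>C. \<exists>p'\<in>loc t v. p' \<noteq> p))"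
proof (induction p arbitrary: t)
  case Nil thus ?case by (intro exI[of _ "{}"]) auto
next
  case (Cons k p0)
  show ?case
  proof (cases t)
    case (PNode S cs)
    with Cons.prems have k: "k < length cs" and sub: "subtree (cs ! k) p0 = Some s"
      by (auto split: if_splits)
    obtain A0 where A1: "\<forall>c\<in>set (cliques s). A0 \<union> c \<in> set (cliques (cs ! k))"
      and A2: "\<forall>v\<in>A0. \<exists>p'\<in>loc (cs ! k) v. p' \<noteq> p0"
      and A3: "\<forall>C\<in>set (cliques (cs ! k)). (\<exists>c\<in>set (cliques s). C = A0 \<union> c) \<or> (\<forall>v\<in>C. \<exists>p'\<in>loc (cs ! k) v. p' \<noteq> p0)"
      using Cons.IH[OF sub] by blast
    have csne: "cs \<noteq> []" using k by auto
    show ?thesis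
    proof (intro exI[of _ "S \<union> A0"] conjI ballI)
      fix c assume "c \<in> set (cliques s)"
      hence "A0 \<union> c \<in> set (cliques (cs ! k))" using A1 by auto
      hence "S \<union> (A0 \<union> c) \<in> set (cliques t)" using PNode cliques_P_intro[OF k] by auto
      thus "S \<union> A0 \<union> c \<in> set (cliques t)" by (simp add: Un_assoc)
    next
      fix v assume "v \<in> S \<union> A0"
      thus "\<exists>p'\<in>loc t v. p' \<noteq> k # p0"
      proof
        assume "v \<in> S" thus ?thesis using loc_root[of v t] PNode by auto
      next
        assume "v \<in> A0" then obtain p' where "p' \<in> loc (cs ! k) v" "p' \<noteq> p0" using A2 by auto
        thus ?thesis using loc_P[OF k] PNode by auto
      qed
    next
      fix C assume C: "C \<in> set (cliques t)"
      then obtain j C' where j: "j < length cs" "C' \<in> set (cliques (cs ! j))" "C = S \<union> C'"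
        using cliques_P[of C S cs] PNode csne by auto
      have Sloc: "\<forall>v\<in>S. \<exists>p'\<in>loc t v. p' \<noteq> k # p0" using loc_root[of _ t] PNode by auto
      show "(\<exists>c\<in>set (cliques s). C = S \<union> A0 \<union> c) \<or> (\<forall>v\<in>C. \<exists>p'\<in>loc t v. p' \<noteq> k # p0)"
      proof (cases "j = k")
        case True
        have "(\<exists>c\<in>set (cliques s). C' = A0 \<union> c) \<or> (\<forall>v\<in>C'. \<exists>p'\<in>loc (cs ! k) v. p' \<noteq> p0)"
          using bspec[OF A3, of C'] j(2) True by simp
        thus ?thesis
        proof
          assume "\<exists>c\<in>set (cliques s). C' = A0 \<union> c"
          then obtain c where "c \<in> set (cliques s)" "C' = A0 \<union> c" by blast
          hence "c \<in> set (cliques s) \<and> C = S \<union> A0 \<union> c" using j(3) by (simp add: Un_assoc)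
          thus ?thesis by blast
        next
          assume h: "\<forall>v\<in>C'. \<exists>p'\<in>loc (cs ! k) v. p' \<noteq> p0"
          have "\<forall>v\<in>C'. \<exists>p'\<in>loc t v. p' \<noteq> k # p0"
          proof
            fix v assume "v \<in> C'"
            then obtain p' where "p' \<in> loc (cs ! k) v" "p' \<noteq> p0" using h by blast
            hence "k # p' \<in> loc t v" "k # p' \<noteq> k # p0" using loc_P[OF k] PNode by auto
            thus "\<exists>p'\<in>loc t v. p' \<noteq> k # p0" by blast
          qed
          hence "\<forall>v\<in>S \<union> C'. \<exists>p'\<in>loc t v. p' \<noteq> k # p0" using Sloc by blast
          thus ?thesis using j(3) by simp
        qed
      next
        case False
        have "\<forall>v\<in>C'. \<exists>p'\<in>loc t v. p' \<noteq> k # p0"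
        proof
          fix v assume "v \<in> C'"
          then obtain p' where "p' \<in> loc (cs ! j) v" using vset_loc cliques_vset j(2) by blast
          hence "j # p' \<in> loc t v" "j # p' \<noteq> k # p0" using loc_P[OF j(1)] PNode False by auto
          thus "\<exists>p'\<in>loc t v. p' \<noteq> k # p0" by blast
        qed
        hence "\<forall>v\<in>S \<union> C'. \<exists>p'\<in>loc t v. p' \<noteq> k # p0" using Sloc by blast
        thus ?thesis using j(3) by simp
      qed
    qed

  next
    case (QNode ps)
    with Cons.prems obtain u where k: "k < length ps" and u: "snd (ps ! k) = Some u"
      and sub: "subtree u p0 = Some s"
      by (auto split: if_splits option.splits)
    obtain A0 where A1: "\<forall>c\<in>set (cliques s). A0 \<union> c \<in> set (cliques u)"
      and A2: "\<forall>v\<in>A0. \<exists>p'\<in>loc u v. p' \<noteq> p0"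
      and A3: "\<forall>C\<in>set (cliques u). (\<exists>c\<in>set (cliques s). C = A0 \<union> c) \<or> (\<forall>v\<in>C. \<exists>p'\<in>loc u v. p' \<noteq> p0)"
      using Cons.IH[OF sub] by blast
    have ownloc: "\<And>v j. j < length ps \<Longrightarrow> v \<in> fst (ps ! j) \<Longrightarrow> \<exists>p'\<in>loc t v. p' \<noteq> k # p0"
    proof -
      fix v j assume "j < length ps" "v \<in> fst (ps ! j)"
      hence "v \<in> own t" using QNode by (force simp: in_set_conv_nth)
      thus "\<exists>p'\<in>loc t v. p' \<noteq> k # p0" using loc_root by blast
    qed
    show ?thesis
    proof (intro exI[of _ "fst (ps ! k) \<union> A0"] conjI ballI)
      fix c assume "c \<in> set (cliques s)"
      hence "A0 \<union> c \<in> set (cliques u)" using A1 by auto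
      hence "fst (ps ! k) \<union> (A0 \<union> c) \<in> set (cliques t)" using QNode cliques_Q_intro[OF k u] by auto
      thus "fst (ps ! k) \<union> A0 \<union> c \<in> set (cliques t)" by (simp add: Un_assoc)
    next
      fix v assume "v \<in> fst (ps ! k) \<union> A0"
      thus "\<exists>p'\<in>loc t v. p' \<noteq> k # p0"
      proof
        assume "v \<in> fst (ps ! k)" thus ?thesis using ownloc k by auto
      next
        assume "v \<in> A0" then obtain p' where "p' \<in> loc u v" "p' \<noteq> p0" using A2 by auto
        thus ?thesis using loc_Q[OF k u] QNode by auto
      qed
    next
      fix C assume C: "C \<in> set (cliques t)"
      then obtain j where j: "j < length ps" and jc: "(snd (ps ! j) = None \<and> C = fst (ps ! j)) \<or>
        (\<exists>c C'. snd (ps ! j) = Some c \<and> C' \<in> set (cliques c) \<and> C = fst (ps ! j) \<union> C')"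
        using cliques_Q[of C ps] QNode by auto
      have Sloc: "\<forall>v\<in>fst (ps ! j). \<exists>p'\<in>loc t v. p' \<noteq> k # p0" using ownloc j by auto
      show "(\<exists>c\<in>set (cliques s). C = fst (ps ! k) \<union> A0 \<union> c) \<or> (\<forall>v\<in>C. \<exists>p'\<in>loc t v. p' \<noteq> k # p0)"
      proof (cases "snd (ps ! j) = None \<and> C = fst (ps ! j)")
        case True thus ?thesis using Sloc by simp
      next
        case False
        then obtain c C' where cC: "snd (ps ! j) = Some c" "C' \<in> set (cliques c)" "C = fst (ps ! j) \<union> C'"
          using jc by auto
        show ?thesis
        proof (cases "j = k")
          case True
          hence cu: "c = u" using cC u by simp
          have "(\<exists>c\<in>set (cliques s). C' = A0 \<union> c) \<or> (\<forall>v\<in>C'. \<exists>p'\<in>loc u v. p' \<noteq> p0)"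
            using bspec[OF A3, of C'] cC(2) cu by simp
          thus ?thesis
          proof
            assume "\<exists>c\<in>set (cliques s). C' = A0 \<union> c"
            then obtain c where "c \<in> set (cliques s)" "C' = A0 \<union> c" by blast
            hence "c \<in> set (cliques s) \<and> C = fst (ps ! k) \<union> A0 \<union> c" using cC(3) True by (simp add: Un_assoc)
            thus ?thesis by blast
          next
            assume h: "\<forall>v\<in>C'. \<exists>p'\<in>loc u v. p' \<noteq> p0"
            have "\<forall>v\<in>C'. \<exists>p'\<in>loc t v. p' \<noteq> k # p0"
            proof
              fix v assume "v \<in> C'"
              then obtain p' where "p' \<in> loc u v" "p' \<noteq> p0" using h by blast
              hence "k # p' \<in> loc t v" "k # p' \<noteq> k # p0" using loc_Q[OF k u] QNode by auto
              thus "\<exists>p'\<in>loc t v. p' \<noteq> k # p0" by blast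
            qed
            hence "\<forall>v\<in>fst (ps ! j) \<union> C'. \<exists>p'\<in>loc t v. p' \<noteq> k # p0" using Sloc by blast
            thus ?thesis using cC(3) by simp
          qed
        next
          case False
          have "\<forall>v\<in>C'. \<exists>p'\<in>loc t v. p' \<noteq> k # p0"
          proof
            fix v assume "v \<in> C'"
            then obtain p' where "p' \<in> loc c v" using vset_loc cliques_vset cC(2) by blast
            hence "j # p' \<in> loc t v" "j # p' \<noteq> k # p0" using loc_Q[OF j cC(1)] QNode False by auto
            thus "\<exists>p'\<in>loc t v. p' \<noteq> k # p0" by blast
          qed
          hence "\<forall>v\<in>fst (ps ! j) \<union> C'. \<exists>p'\<in>loc t v. p' \<noteq> k # p0" using Sloc by blast
          thus ?thesis using cC(3) by simp
        qed
      qed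
    qed
  qed
qed



lemma maxclique_exists:
  assumes "is_clique n E C" shows "\<exists>D. max_clique n E D \<and> C \<subseteq> D"
proof -
  let ?F = "{D. is_clique n E D \<and> C \<subseteq> D}"
  have fin: "finite ?F"
    by (rule finite_subset[of _ "Pow {1..n}"]) (auto simp: is_clique_def)
  have ne: "?F \<noteq> {}" using assms by auto
  have "Max (card ` ?F) \<in> card ` ?F" using fin ne by (intro Max_in) auto
  then obtain D where D0: "D \<in> ?F" "card D = Max (card ` ?F)" by (auto simp del: is_clique_def)
  have D: "D \<in> ?F" "\<forall>D'\<in>?F. card D' \<le> card D"
    using D0 fin by (auto simp del: is_clique_def)
  have "max_clique n E D"
    unfolding max_clique_def
  proof (intro conjI allI impI)
    show "is_clique n E D" using D by auto
    fix D' assume h: "is_clique n E D' \<and> D \<subseteq> D'"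
    hence "D' \<in> ?F" using D by auto
    hence "card D' \<le> card D" using D by auto
    moreover have "finite D'" using h by (auto simp: is_clique_def intro: finite_subset)
    ultimately have "D = D'" using h card_seteq[of D' D] by blast
    thus "D' = D" by simp
  qed
  thus ?thesis using D by auto
qed

lemma edge_iff:
  assumes "u \<noteq> v" "u \<in> {1..n}" "v \<in> {1..n}"
  shows "{u, v} \<in> E \<longleftrightarrow> (\<exists>D. max_clique n E D \<and> u \<in> D \<and> v \<in> D)"
proof
  assume e: "{u, v} \<in> E"
  have e': "{v, u} \<in> E" using e by (simp add: insert_commute)
  have "is_clique n E {u, v}" unfolding is_clique_def using assms e e' by auto
  thus "\<exists>D. max_clique n E D \<and> u \<in> D \<and> v \<in> D" using maxclique_exists by blast
next
  assume "\<exists>D. max_clique n E D \<and> u \<in> D \<and> v \<in> D"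
  thus "{u, v} \<in> E" using assms by (auto simp: max_clique_def is_clique_def)
qed

lemma vertex_in:
  assumes "v \<in> {1..n}" shows "\<exists>D. max_clique n E D \<and> v \<in> D"
proof -
  have "is_clique n E {v}" using assms by (auto simp: is_clique_def)
  thus ?thesis using maxclique_exists by blast
qed

lemma model:
  fixes lo hi :: "nat \<Rightarrow> nat"
  assumes sg: "simple_graph n E"
    and le: "\<forall>v\<in>{1..n}. lo v \<le> hi v"
    and ed: "\<forall>u\<in>{1..n}. \<forall>v\<in>{1..n}. u \<noteq> v \<longrightarrow> ({u, v} \<in> E \<longleftrightarrow> lo u \<le> hi v \<and> lo v \<le> hi u)"
    and xy: "x \<noteq> y" and yn: "y \<in> {1..n}" and hx: "hi x = m" and ly: "lo y = m"
  shows "interval_graph n (E - {{x, y}})"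
proof -
  define g where "g j = (if j \<le> m then j else j + 1)" for j :: nat
  define h where "h j = (if j < m then j else j + 1)" for j :: nat
  define a where "a v = real (if v = y then m + 1 else g (lo v))" for v
  define b where "b v = real (if v = x then m else h (hi v))" for v
  have sg': "simple_graph n (E - {{x, y}})" using sg by (auto simp: simple_graph_def)
  have A: "\<forall>v\<in>{1..n}. a v \<le> b v"
  proof
    fix v assume v: "v \<in> {1..n}"
    have lvv: "lo v \<le> hi v" "lo y \<le> hi y" using le v yn by auto
    show "a v \<le> b v" using lvv hx ly xy unfolding a_def b_def g_def h_def
      by (cases "v = x"; cases "v = y") (auto simp: of_nat_le_iff)
  qed
  have L1: "g p \<le> h q \<longleftrightarrow> p \<le> q" for p q unfolding g_def h_def by auto
  have L2: "g p \<le> m \<longleftrightarrow> p \<le> m" for p unfolding g_def by auto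
  have L3: "Suc m \<le> h q \<longleftrightarrow> m \<le> q" for q unfolding h_def by auto
  have B: "\<forall>u\<in>{1..n}. \<forall>v\<in>{1..n}. u \<noteq> v \<longrightarrow> ({u, v} \<in> E - {{x, y}} \<longleftrightarrow> a u \<le> b v \<and> a v \<le> b u)"
  proof (intro ballI impI)
    fix u v assume u: "u \<in> {1..n}" and v: "v \<in> {1..n}" and uv: "u \<noteq> v"
    have E: "{u, v} \<in> E \<longleftrightarrow> lo u \<le> hi v \<and> lo v \<le> hi u" using ed u v uv by blast
    show "{u, v} \<in> E - {{x, y}} \<longleftrightarrow> a u \<le> b v \<and> a v \<le> b u"
    proof (cases "(u = x \<and> v = y) \<or> (u = y \<and> v = x)")
      case True thus ?thesis unfolding a_def b_def using xy by auto
    next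
      case False
      hence D: "{u, v} \<noteq> {x, y}" by (auto simp: doubleton_eq_iff)
      have "a u \<le> b v \<and> a v \<le> b u \<longleftrightarrow> lo u \<le> hi v \<and> lo v \<le> hi u"
        unfolding a_def b_def of_nat_le_iff using False uv hx ly xy
        by (cases "u = x"; cases "u = y"; cases "v = x"; cases "v = y") (simp_all add: L1 L2 L3)
      thus ?thesis using E D by blast
    qed
  qed
  show ?thesis unfolding interval_graph_def using sg' A B by blast
qed

lemma split_edge:
  assumes sg: "simple_graph n E"
    and cs: "set Cs = {C. max_clique n E C}"
    and cons: "\<forall>v i j k. i \<le> j \<and> j \<le> k \<and> k < length Cs \<and> v \<in> Cs ! i \<and> v \<in> Cs ! k \<longrightarrow> v \<in> Cs ! j"
    and xy: "x \<noteq> y" and xn: "x \<in> {1..n}" and yn: "y \<in> {1..n}"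
    and m: "m < length Cs" "x \<in> Cs ! m" "y \<in> Cs ! m"
    and mu: "\<forall>j<length Cs. x \<in> Cs ! j \<and> y \<in> Cs ! j \<longrightarrow> j = m"
    and jx: "jx < length Cs" "x \<in> Cs ! jx" "y \<notin> Cs ! jx"
    and jy: "jy < length Cs" "y \<in> Cs ! jy" "x \<notin> Cs ! jy"
  shows "interval_edge n E x y"
proof -
  define I where "I v = {j. j < length Cs \<and> v \<in> Cs ! j}" for v
  define lo where "lo v = Min (I v)" for v
  define hi where "hi v = Max (I v)" for v
  have fin: "finite (I v)" for v unfolding I_def by auto
  have ne: "I v \<noteq> {}" if vv: "v \<in> {1..n}" for v
  proof -
    obtain D where "max_clique n E D" "v \<in> D" using vertex_in[OF vv, of E] by blast
    hence "D \<in> set Cs" "v \<in> D" using cs by auto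
    then obtain j where "j < length Cs" "Cs ! j = D" by (auto simp: in_set_conv_nth)
    thus ?thesis unfolding I_def using \<open>v \<in> D\<close> by auto
  qed
  have mem: "v \<in> Cs ! j \<longleftrightarrow> lo v \<le> j \<and> j \<le> hi v" if "v \<in> {1..n}" "j < length Cs" for v j
  proof
    assume "v \<in> Cs ! j" hence "j \<in> I v" using that unfolding I_def by auto
    thus "lo v \<le> j \<and> j \<le> hi v" unfolding lo_def hi_def using fin by auto
  next
    assume h: "lo v \<le> j \<and> j \<le> hi v"
    have "lo v \<in> I v" "hi v \<in> I v" unfolding lo_def hi_def using fin ne[OF that(1)] by auto
    thus "v \<in> Cs ! j" using cons h unfolding I_def by blast
  qed
  have hil: "hi v < length Cs" "lo v \<le> hi v" if "v \<in> {1..n}" for v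
  proof -
    have "lo v \<in> I v" "hi v \<in> I v" unfolding lo_def hi_def using fin ne[OF that] by auto
    thus "hi v < length Cs" "lo v \<le> hi v" unfolding I_def using mem that by auto
  qed
  have ed: "\<forall>u\<in>{1..n}. \<forall>v\<in>{1..n}. u \<noteq> v \<longrightarrow> ({u, v} \<in> E \<longleftrightarrow> lo u \<le> hi v \<and> lo v \<le> hi u)"
  proof (intro ballI impI)
    fix u v assume u: "u \<in> {1..n}" and v: "v \<in> {1..n}" and uv: "u \<noteq> v"
    show "{u, v} \<in> E \<longleftrightarrow> lo u \<le> hi v \<and> lo v \<le> hi u"
    proof
      assume "{u, v} \<in> E"
      then obtain D where D: "max_clique n E D" "u \<in> D" "v \<in> D" using edge_iff[OF uv u v] by blast
      hence "D \<in> set Cs" using cs by auto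
      then obtain j where j: "j < length Cs" "Cs ! j = D" by (auto simp: in_set_conv_nth)
      show "lo u \<le> hi v \<and> lo v \<le> hi u" using mem[OF u j(1)] mem[OF v j(1)] j D by auto
    next
      assume h: "lo u \<le> hi v \<and> lo v \<le> hi u"
      define j where "j = max (lo u) (lo v)"
      have jl: "j < length Cs" using hil[OF u] hil[OF v] h unfolding j_def by auto
      have "u \<in> Cs ! j" "v \<in> Cs ! j" using mem[OF u jl] mem[OF v jl] h hil[OF u] hil[OF v] unfolding j_def by auto
      moreover have "max_clique n E (Cs ! j)" using cs jl nth_mem[OF jl] by auto
      ultimately show "{u, v} \<in> E" using edge_iff[OF uv u v] by blast
    qed
  qed
  have le: "\<forall>v\<in>{1..n}. lo v \<le> hi v" using hil by blast
  have xm: "lo x \<le> m" "m \<le> hi x" and ym: "lo y \<le> m" "m \<le> hi y"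
    using mem[OF xn m(1)] mem[OF yn m(1)] m by auto
  have both: "j = m" if "max (lo x) (lo y) \<le> j" "j \<le> min (hi x) (hi y)" for j
  proof -
    have "j < length Cs" using that hil[OF xn] by auto
    thus ?thesis using mu mem[OF xn] mem[OF yn] that by auto
  qed
  have a: "max (lo x) (lo y) = m" using both[of "max (lo x) (lo y)"] xm ym by auto
  have b: "min (hi x) (hi y) = m" using both[of "min (hi x) (hi y)"] xm ym by auto
  have jxr: "lo x \<le> jx" "jx \<le> hi x" "\<not> (lo y \<le> jx \<and> jx \<le> hi y)"
    using mem[OF xn jx(1)] mem[OF yn jx(1)] jx by auto
  have jyr: "lo y \<le> jy" "jy \<le> hi y" "\<not> (lo x \<le> jy \<and> jy \<le> hi x)"
    using mem[OF xn jy(1)] mem[OF yn jy(1)] jy by auto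
  have e: "{x, y} \<in> E" using ed xn yn xy xm ym by auto
  show ?thesis
  proof (cases "lo x \<le> lo y")
    case True
    hence ly: "lo y = m" using a by auto
    have "hi x = m" using b jyr ly xm by (cases "hi x \<le> hi y") auto
    thus ?thesis unfolding interval_edge_def using e model[OF sg le ed xy yn _ ly] by blast
  next
    case False
    hence lx: "lo x = m" using a by auto
    have hy: "hi y = m" using b jxr lx ym by (cases "hi x \<le> hi y") auto
    have "interval_graph n (E - {{y, x}})" using model[OF sg le ed _ xn hy lx] xy by blast
    thus ?thesis unfolding interval_edge_def using e by (simp add: insert_commute)
  qed
qed


definition allok :: "mpq \<Rightarrow> bool" where
  "allok t \<longleftrightarrow> (\<forall>p s. subtree t p = Some s \<longrightarrow> node_ok s)"

lemma allok_sub: "allok t \<Longrightarrow> subtree t q = Some s \<Longrightarrow> allok s"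
  unfolding allok_def using subtree_app by metis

lemma allok_P: "allok (PNode S cs) \<Longrightarrow> k < length cs \<Longrightarrow> allok (cs ! k)"
  using allok_sub[of "PNode S cs" "[k]"] by simp

lemma allok_Q: "allok (QNode ps) \<Longrightarrow> k < length ps \<Longrightarrow> snd (ps ! k) = Some c \<Longrightarrow> allok c"
  using allok_sub[of "QNode ps" "[k]"] by simp

lemma ne_cover: "allok t \<Longrightarrow> cliques t \<noteq> [] \<and> vset t \<subseteq> \<Union>(set (cliques t))"
proof (induction t)
  case (PNode S cs)
  show ?case
  proof (cases "cs = []")
    case True thus ?thesis by simp
  next
    case False
    have IH: "cliques (cs ! k) \<noteq> [] \<and> vset (cs ! k) \<subseteq> \<Union>(set (cliques (cs ! k)))" if "k < length cs" for k
      using PNode.IH[of "cs ! k"] allok_P[OF PNode.prems that] that by simp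
    have "cliques (cs ! 0) \<noteq> []" using IH[of 0] False by simp
    then obtain C' where C': "C' \<in> set (cliques (cs ! 0))" by (cases "cliques (cs ! 0)") auto
    have C0: "S \<union> C' \<in> set (cliques (PNode S cs))" using cliques_P_intro[of 0 cs C' S] C' False by simp
    have ne: "cliques (PNode S cs) \<noteq> []" using C0 by (metis empty_iff empty_set)
    have cov: "vset (PNode S cs) \<subseteq> \<Union>(set (cliques (PNode S cs)))"
    proof
      fix v assume "v \<in> vset (PNode S cs)"
      hence "v \<in> S \<or> (\<exists>k<length cs. v \<in> vset (cs ! k))" by (auto simp: in_set_conv_nth)
      thus "v \<in> \<Union>(set (cliques (PNode S cs)))"
      proof
        assume "v \<in> S" thus ?thesis using C0 by blast
      next
        assume "\<exists>k<length cs. v \<in> vset (cs ! k)"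
        then obtain k where k: "k < length cs" "v \<in> vset (cs ! k)" by blast
        then obtain C'' where "C'' \<in> set (cliques (cs ! k))" "v \<in> C''" using IH[OF k(1)] by blast
        thus ?thesis using cliques_P_intro[OF k(1), of C'' S] by blast
      qed
    qed
    show ?thesis using ne cov by blast
  qed
next
  case (QNode ps)
  have "node_ok (QNode ps)" using QNode.prems unfolding allok_def by (metis subtree.simps(1))
  hence len: "length ps \<ge> 3" by (simp add: Let_def)
  have pos: "\<exists>C\<in>set (cliques (QNode ps)). fst (ps ! j) \<subseteq> C" and
       posv: "\<And>c. snd (ps ! j) = Some c \<Longrightarrow> vset c \<subseteq> \<Union>(set (cliques (QNode ps)))"
    if j: "j < length ps" for j
  proof -
    have IH: "cliques c \<noteq> [] \<and> vset c \<subseteq> \<Union>(set (cliques c))" if c: "snd (ps ! j) = Some c" for c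
      using QNode.IH[of "ps ! j" "Some c" c] allok_Q[OF QNode.prems j c] j c by (simp add: snds_snd)
    show "\<exists>C\<in>set (cliques (QNode ps)). fst (ps ! j) \<subseteq> C"
    proof (cases "snd (ps ! j)")
      case None thus ?thesis using cliques_Q_intro2[OF j] by blast
    next
      case (Some c)
      then obtain C' where "C' \<in> set (cliques c)" using IH[OF Some] by (cases "cliques c") auto
      thus ?thesis using cliques_Q_intro[OF j Some] by blast
    qed
    show "vset c \<subseteq> \<Union>(set (cliques (QNode ps)))" if c: "snd (ps ! j) = Some c" for c
    proof
      fix v assume "v \<in> vset c"
      then obtain C' where "C' \<in> set (cliques c)" "v \<in> C'" using IH[OF c] by blast
      thus "v \<in> \<Union>(set (cliques (QNode ps)))" using cliques_Q_intro[OF j c] by blast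
    qed
  qed
  have "\<exists>C\<in>set (cliques (QNode ps)). fst (ps ! 0) \<subseteq> C" using len by (intro pos[of 0]) auto
  hence ne: "cliques (QNode ps) \<noteq> []" by (metis empty_iff empty_set)
  have cov: "vset (QNode ps) \<subseteq> \<Union>(set (cliques (QNode ps)))"
  proof
    fix v assume "v \<in> vset (QNode ps)"
    then obtain j where j: "j < length ps" "v \<in> fst (ps ! j) \<union> subvs (snd (ps ! j))"
      by (auto simp: in_set_conv_nth subvs_def)
    show "v \<in> \<Union>(set (cliques (QNode ps)))"
    proof (cases "snd (ps ! j)")
      case None
      hence "v \<in> fst (ps ! j)" using j by (simp add: subvs_def)
      thus ?thesis using pos[OF j(1)] by blast
    next
      case (Some c)
      hence "v \<in> fst (ps ! j) \<or> v \<in> vset c" using j by (simp add: subvs_def)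
      thus ?thesis using pos[OF j(1)] posv[OF j(1) Some] by blast
    qed
  qed
  show ?case using ne cov by blast
qed

lemma loc_app: "subtree t q = Some s \<Longrightarrow> p \<in> loc s v \<Longrightarrow> q @ p \<in> loc t v"
  unfolding loc_def using subtree_app by auto



lemma uniq_loc:
  assumes "\<exists>!p. \<exists>t. subtree T p = Some t \<and> v \<in> own t" "subtree T q = Some s" "v \<in> own s"
  shows "\<forall>p\<in>loc T v. p = q"
  using assms unfolding loc_def Ex1_def by blast

theorem mainTheorem5:
  fixes n :: nat and E :: "nat set set" and T :: mpq
    and x y :: nat and q :: "nat list" and ps :: "(nat set \<times> mpq option) list" and i :: nat
  assumes "interval_graph n E"
    and "mpq_tree n E T"
    and "x \<noteq> y"
    and "subtree T q = Some (QNode ps)"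
    and "x \<in> own (QNode ps)" and "y \<in> own (QNode ps)"
    and "i < length ps"
    and "x \<in> fst (ps ! i)" and "y \<in> fst (ps ! i)"
    and "\<forall>j<length ps. j \<noteq> i \<longrightarrow> \<not> (x \<in> fst (ps ! j) \<and> y \<in> fst (ps ! j))"
    and "is_clique n E (subvs (snd (ps ! i)))"
  shows "interval_edge n E x y"
proof -
  note sub = assms(4) and il = assms(7)
  have sg: "simple_graph n E" using assms(1) unfolding interval_graph_def by blast
  have M: "(\<forall>p t. subtree T p = Some t \<longrightarrow> node_ok t) \<and> vset T = {1..n} \<and>
     (\<forall>v\<in>{1..n}. \<exists>!p. \<exists>t. subtree T p = Some t \<and> v \<in> own t) \<and>
     distinct (cliques T) \<and> set (cliques T) = {C. max_clique n E C} \<and>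
     {cliques T' | T'. reord T T'} = {Cs. consecutive_clique_order n E Cs}"
    using assms(2) unfolding mpq_tree_def .
  have allT: "allok T" unfolding allok_def using M by (rule conjunct1)
  have vT: "vset T = {1..n}" using M by (rule conjunct2[THEN conjunct1])
  have uniq: "\<forall>v\<in>{1..n}. \<exists>!p. \<exists>t. subtree T p = Some t \<and> v \<in> own t"
    using M by (rule conjunct2[THEN conjunct2, THEN conjunct1])
  have dist: "distinct (cliques T)" using M by (rule conjunct2[THEN conjunct2, THEN conjunct2, THEN conjunct1])
  have cs: "set (cliques T) = {C. max_clique n E C}"
    using M by (rule conjunct2[THEN conjunct2, THEN conjunct2, THEN conjunct2, THEN conjunct1])
  have ro: "{cliques T' | T'. reord T T'} = {Cs. consecutive_clique_order n E Cs}"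
    using M by (rule conjunct2[THEN conjunct2, THEN conjunct2, THEN conjunct2, THEN conjunct2])
  define Cs where "Cs = cliques T"
  have "cliques T \<in> {cliques T' | T'. reord T T'}" using reord_refl by blast
  hence "cliques T \<in> {Cs. consecutive_clique_order n E Cs}" by (simp only: ro)
  hence cco: "consecutive_clique_order n E Cs" unfolding Cs_def by simp
  hence cons: "\<forall>v i j k. i \<le> j \<and> j \<le> k \<and> k < length Cs \<and> v \<in> Cs ! i \<and> v \<in> Cs ! k \<longrightarrow> v \<in> Cs ! j"
    unfolding consecutive_clique_order_def by (rule conjunct2[THEN conjunct2])
  have csC: "set Cs = {C. max_clique n E C}" using cs Cs_def by simp
  have distC: "distinct Cs" using dist Cs_def by simp
  have inV: "v \<in> {1..n}" if "v \<in> own (QNode ps)" for v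
    using loc_vset[of q T v] sub that vT unfolding loc_def by auto
  have xn: "x \<in> {1..n}" and yn: "y \<in> {1..n}" using inV assms(5,6) by auto
  have lx: "\<forall>p\<in>loc T x. p = q" using uniq_loc[OF bspec[OF uniq xn] sub assms(5)] .
  have ly: "\<forall>p\<in>loc T y. p = q" using uniq_loc[OF bspec[OF uniq yn] sub assms(6)] .
  obtain A where A1: "\<forall>c\<in>set (cliques (QNode ps)). A \<union> c \<in> set Cs"
    and A2: "\<forall>v\<in>A. \<exists>p'\<in>loc T v. p' \<noteq> q"
    and A3: "\<forall>C\<in>set Cs. (\<exists>c\<in>set (cliques (QNode ps)). C = A \<union> c) \<or> (\<forall>v\<in>C. \<exists>p'\<in>loc T v. p' \<noteq> q)"
    using path_cliques[OF sub] unfolding Cs_def by blast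
  have xA: "x \<notin> A" using A2 lx by blast
  have yA: "y \<notin> A" using A2 ly by blast
  have allQ: "allok (QNode ps)" using allok_sub[OF allT sub] .
  have nodeQ: "node_ok (QNode ps)" using allQ unfolding allok_def by (metis subtree.simps(1))
  have child_loc: "\<exists>p'\<in>loc T v. p' \<noteq> q" if cl: "j < length ps" "snd (ps ! j) = Some c" "v \<in> vset c" for j c v
  proof -
    obtain p'' where "p'' \<in> loc c v" using vset_loc cl(3) by blast
    hence "j # p'' \<in> loc (QNode ps) v" using loc_Q[OF cl(1,2)] by blast
    hence "q @ (j # p'') \<in> loc T v" using loc_app[OF sub] by blast
    thus ?thesis by auto
  qed
  have xc: "x \<notin> vset c" and yc: "y \<notin> vset c" if "j < length ps" "snd (ps ! j) = Some c" for j c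
    using child_loc[OF that] lx ly by blast+
  have charx: "\<exists>j<length ps. (snd (ps ! j) = None \<and> C = A \<union> fst (ps ! j)) \<or>
        (\<exists>c C'. snd (ps ! j) = Some c \<and> C' \<in> set (cliques c) \<and> C = A \<union> (fst (ps ! j) \<union> C'))"
    if C: "C \<in> set Cs" "x \<in> C" for C
  proof -
    have dj: "(\<exists>c\<in>set (cliques (QNode ps)). C = A \<union> c) \<or> (\<forall>v\<in>C. \<exists>p'\<in>loc T v. p' \<noteq> q)"
      using A3 C(1) by (rule bspec)
    have nd: "\<not> (\<forall>v\<in>C. \<exists>p'\<in>loc T v. p' \<noteq> q)" using C(2) lx by blast
    have "\<exists>c\<in>set (cliques (QNode ps)). C = A \<union> c"
    proof (rule disjE[OF dj])
      assume "\<exists>c\<in>set (cliques (QNode ps)). C = A \<union> c" thus ?thesis .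
    next
      assume "\<forall>v\<in>C. \<exists>p'\<in>loc T v. p' \<noteq> q" thus ?thesis using nd by contradiction
    qed
    then obtain c where c: "c \<in> set (cliques (QNode ps))" "C = A \<union> c" by blast
    then obtain j where "j < length ps" "(snd (ps ! j) = None \<and> c = fst (ps ! j)) \<or>
        (\<exists>c' C'. snd (ps ! j) = Some c' \<and> C' \<in> set (cliques c') \<and> c = fst (ps ! j) \<union> C')"
      using cliques_Q[OF c(1)] by blast
    thus ?thesis using c(2) by blast
  qed
  define D where "D = A \<union> fst (ps ! i) \<union> subvs (snd (ps ! i))"
  have Dfacts: "D \<in> set Cs \<and> (\<forall>C\<in>set Cs. x \<in> C \<and> y \<in> C \<longrightarrow> C = D)"
  proof (cases "snd (ps ! i)")
    case None
    have D: "D = A \<union> fst (ps ! i)" unfolding D_def using None by (simp add: subvs_def)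
    have "D \<in> set Cs" using A1 cliques_Q_intro2[OF il None] D by blast
    moreover have "C = D" if Cp: "C \<in> set Cs" "x \<in> C" "y \<in> C" for C
    proof -
      obtain j where j: "j < length ps" and jc: "(snd (ps ! j) = None \<and> C = A \<union> fst (ps ! j)) \<or>
        (\<exists>c C'. snd (ps ! j) = Some c \<and> C' \<in> set (cliques c) \<and> C = A \<union> (fst (ps ! j) \<union> C'))"
        using charx[OF Cp(1,2)] by blast
      have xy: "x \<in> fst (ps ! j) \<and> y \<in> fst (ps ! j)"
      proof (cases "snd (ps ! j) = None \<and> C = A \<union> fst (ps ! j)")
        case True thus ?thesis using Cp xA yA by blast
      next
        case False
        then obtain c C' where cc: "snd (ps ! j) = Some c" "C' \<in> set (cliques c)" "C = A \<union> (fst (ps ! j) \<union> C')"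
          using jc by blast
        have "C' \<subseteq> vset c" using cliques_vset cc(2) by blast
        thus ?thesis using Cp xA yA xc[OF j cc(1)] yc[OF j cc(1)] cc(3) by blast
      qed
      hence "j = i" using assms(10) j by blast
      thus ?thesis using jc None D by auto
    qed
    ultimately show ?thesis by blast
  next
    case (Some u)
    have D: "D = A \<union> fst (ps ! i) \<union> vset u" unfolding D_def using Some by (simp add: subvs_def)
    have allu: "allok u" using allok_Q[OF allQ il Some] .
    have neu: "cliques u \<noteq> []" and covu: "vset u \<subseteq> \<Union>(set (cliques u))" using ne_cover[OF allu] by blast+
    have K: "A \<union> (fst (ps ! i) \<union> C'') \<in> set Cs" if "C'' \<in> set (cliques u)" for C''
      using A1 cliques_Q_intro[OF il Some that] by blast
    have Kmax: "max_clique n E (A \<union> (fst (ps ! i) \<union> C''))" if "C'' \<in> set (cliques u)" for C''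
      using K[OF that] csC by blast
    obtain C0 where C0: "C0 \<in> set (cliques u)" using neu by (cases "cliques u") auto
    have vu: "vset u \<subseteq> {1..n}" and vucl: "\<forall>a\<in>vset u. \<forall>b\<in>vset u. a \<noteq> b \<longrightarrow> {a, b} \<in> E"
      using assms(11) Some unfolding is_clique_def subvs_def by auto
    have Dcl: "is_clique n E D"
      unfolding is_clique_def
    proof (intro conjI ballI impI)
      have "A \<union> (fst (ps ! i) \<union> C0) \<subseteq> {1..n}" using Kmax[OF C0] unfolding max_clique_def is_clique_def by blast
      thus "D \<subseteq> {1..n}" using vu D by blast
    next
      fix w1 w2 assume w: "w1 \<in> D" "w2 \<in> D" "w1 \<noteq> w2"
      show "{w1, w2} \<in> E"
      proof (cases "w1 \<in> vset u \<and> w2 \<in> vset u")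
        case True thus ?thesis using vucl w by blast
      next
        case False
        have "\<exists>C''\<in>set (cliques u). w1 \<in> A \<union> (fst (ps ! i) \<union> C'') \<and> w2 \<in> A \<union> (fst (ps ! i) \<union> C'')"
        proof (cases "w1 \<in> vset u")
          case True
          then obtain C'' where "C'' \<in> set (cliques u)" "w1 \<in> C''" using covu by blast
          thus ?thesis using False True w D by blast
        next
          case f1: False
          show ?thesis
          proof (cases "w2 \<in> vset u")
            case True
            then obtain C'' where "C'' \<in> set (cliques u)" "w2 \<in> C''" using covu by blast
            thus ?thesis using f1 True w D by blast
          next
            case False thus ?thesis using f1 w D C0 by blast
          qed
        qed
        then obtain C'' where "C'' \<in> set (cliques u)" "w1 \<in> A \<union> (fst (ps ! i) \<union> C'')" "w2 \<in> A \<union> (fst (ps ! i) \<union> C'')"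
          by blast
        thus ?thesis using Kmax w(3) unfolding max_clique_def is_clique_def by blast
      qed
    qed
    have eqD: "A \<union> (fst (ps ! i) \<union> C'') = D" if "C'' \<in> set (cliques u)" for C''
    proof -
      have "C'' \<subseteq> vset u" using cliques_vset that by blast
      hence "A \<union> (fst (ps ! i) \<union> C'') \<subseteq> D" using D by blast
      thus ?thesis using Kmax[OF that] Dcl unfolding max_clique_def by blast
    qed
    have "D \<in> set Cs" using K[OF C0] eqD[OF C0] by simp
    moreover have "C = D" if Cp: "C \<in> set Cs" "x \<in> C" "y \<in> C" for C
    proof -
      obtain j where j: "j < length ps" and jc: "(snd (ps ! j) = None \<and> C = A \<union> fst (ps ! j)) \<or>
        (\<exists>c C'. snd (ps ! j) = Some c \<and> C' \<in> set (cliques c) \<and> C = A \<union> (fst (ps ! j) \<union> C'))"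
        using charx[OF Cp(1,2)] by blast
      have xy: "x \<in> fst (ps ! j) \<and> y \<in> fst (ps ! j)"
      proof (cases "snd (ps ! j) = None \<and> C = A \<union> fst (ps ! j)")
        case True thus ?thesis using Cp xA yA by blast
      next
        case False
        then obtain c C' where cc: "snd (ps ! j) = Some c" "C' \<in> set (cliques c)" "C = A \<union> (fst (ps ! j) \<union> C')"
          using jc by blast
        have "C' \<subseteq> vset c" using cliques_vset cc(2) by blast
        thus ?thesis using Cp xA yA xc[OF j cc(1)] yc[OF j cc(1)] cc(3) by blast
      qed
      hence ji: "j = i" using assms(10) j by blast
      then obtain C' where "C' \<in> set (cliques u)" "C = A \<union> (fst (ps ! i) \<union> C')"
        using jc Some by auto
      thus ?thesis using eqD by blast
    qed
    ultimately show ?thesis by blast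
  qed
  have ivl: "\<forall>v\<in>(\<Union>j<length ps. fst (ps ! j)). \<exists>l r. l < r \<and> r < length ps \<and>
      (\<forall>j<length ps. v \<in> fst (ps ! j) \<longleftrightarrow> l \<le> j \<and> j \<le> r)"
    using nodeQ by (simp add: Let_def)
  have sep: "\<exists>C\<in>set Cs. w \<in> C \<and> z \<notin> C"
    if w: "w \<in> fst (ps ! i)" and z: "\<forall>p\<in>loc T z. p = q" "z \<notin> A"
      and ex: "\<forall>j<length ps. j \<noteq> i \<longrightarrow> \<not> (w \<in> fst (ps ! j) \<and> z \<in> fst (ps ! j))" for w z
  proof -
    have "w \<in> (\<Union>j<length ps. fst (ps ! j))" using w il by blast
    then obtain l r where lr: "l < r" "r < length ps" "\<forall>j<length ps. w \<in> fst (ps ! j) \<longleftrightarrow> l \<le> j \<and> j \<le> r"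
      using ivl by blast
    define j where "j = (if i = l then r else l)"
    have li: "l \<le> i" "i \<le> r" using lr(3) w il by auto
    have jl: "j < length ps" "j \<noteq> i" using lr li unfolding j_def by auto
    have wj: "w \<in> fst (ps ! j)" using lr li jl unfolding j_def by auto
    have zj: "z \<notin> fst (ps ! j)" using ex jl wj by blast
    show ?thesis
    proof (cases "snd (ps ! j)")
      case None
      have "A \<union> fst (ps ! j) \<in> set Cs" using A1 cliques_Q_intro2[OF jl(1) None] by blast
      moreover have "w \<in> A \<union> fst (ps ! j) \<and> z \<notin> A \<union> fst (ps ! j)" using wj zj z(2) by auto
      ultimately show ?thesis by (intro bexI[of _ "A \<union> fst (ps ! j)"])
    next
      case (Some c)
      have "cliques c \<noteq> []" using ne_cover[OF allok_Q[OF allQ jl(1) Some]] by blast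
      then obtain C' where C': "C' \<in> set (cliques c)" by (cases "cliques c") auto
      have "A \<union> (fst (ps ! j) \<union> C') \<in> set Cs" using A1 cliques_Q_intro[OF jl(1) Some C'] by blast
      moreover have zC: "z \<notin> C'" using cliques_vset[OF C'] child_loc[OF jl(1) Some, of z] z(1) by blast
      moreover have "w \<in> A \<union> (fst (ps ! j) \<union> C') \<and> z \<notin> A \<union> (fst (ps ! j) \<union> C')"
        using wj zj z(2) zC by auto
      ultimately show ?thesis by (intro bexI[of _ "A \<union> (fst (ps ! j) \<union> C')"])
    qed
  qed
  have ex2: "\<forall>j<length ps. j \<noteq> i \<longrightarrow> \<not> (y \<in> fst (ps ! j) \<and> x \<in> fst (ps ! j))"
    using assms(10) by blast
  obtain Cx where Cx: "Cx \<in> set Cs" "x \<in> Cx" "y \<notin> Cx" using sep[OF assms(8) ly yA assms(10)] by blast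
  obtain Cy where Cy: "Cy \<in> set Cs" "y \<in> Cy" "x \<notin> Cy" using sep[OF assms(9) lx xA ex2] by blast
  have DC: "D \<in> set Cs" using Dfacts by blast
  obtain m where m: "m < length Cs" "Cs ! m = D" using DC by (metis in_set_conv_nth)
  obtain jx where jx: "jx < length Cs" "Cs ! jx = Cx" using Cx(1) by (metis in_set_conv_nth)
  obtain jy where jy: "jy < length Cs" "Cs ! jy = Cy" using Cy(1) by (metis in_set_conv_nth)
  have xyD: "x \<in> D" "y \<in> D" unfolding D_def using assms(8,9) by auto
  have mu: "\<forall>j<length Cs. x \<in> Cs ! j \<and> y \<in> Cs ! j \<longrightarrow> j = m"
  proof (intro allI impI)
    fix j assume j: "j < length Cs" "x \<in> Cs ! j \<and> y \<in> Cs ! j"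
    have "Cs ! j \<in> set Cs" using j(1) by simp
    hence "Cs ! j = D" using Dfacts j(2) by blast
    hence "Cs ! j = Cs ! m" using m by simp
    thus "j = m" using nth_eq_iff_index_eq[OF distC j(1) m(1)] by simp
  qed
  have m2: "x \<in> Cs ! m" "y \<in> Cs ! m" using m xyD by auto
  have jx2: "x \<in> Cs ! jx" "y \<notin> Cs ! jx" using jx Cx by auto
  have jy2: "y \<in> Cs ! jy" "x \<notin> Cs ! jy" using jy Cy by auto
  show ?thesis
    using split_edge[OF sg csC cons assms(3) xn yn m(1) m2 mu jx(1) jx2 jy(1) jy2] .
qed

end
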